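(* Let $G(\pi_i,\pi_i')=\frac12\|\pi_i-\pi_i'\|^2$ and $\mu>0$. Let $K\ge3$ and $T_\sigma\ge\max(K^4,3)$. Let $\sigma^0\in\mathcal X$ be deterministic and let $\sigma^1,\dots,\sigma^K$ be $\mathcal X$-valued random variables such that, for some $c>0$, $$\mathbb E\big[\|\pi^{\mu,\sigma^k}-\sigma^{k+1}\|^2\mid\sigma^k\big]\le c^2\frac{\ln T_\sigma}{T_\sigma}\quad\text{for } k=0,\dots,K-1.$$ Assume $\sqrt{\sum_{i=1}^N\|\nabla_{\pi_i}v_i(\pi)\|^2}\le\zeta$ for all $\pi\in\mathcal X$. Then $$\mathbb E[\mathrm{exploit}(\sigma^K)]\le\frac{2\Big(\mathrm{diam}(\mathcal X)\big(cL+\mu\sqrt c\sqrt{2\,\mathrm{diam}(\mathcal X)+\frac\zeta\mu+c}\big)+c\zeta\Big)\ln K+\mu\,\mathrm{diam}(\mathcal X)^2}{\sqrt K}.$$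
   Context: Game. Let $N\ge1$. For each $i\in[N]$, $\mathcal X_i\subseteq\mathbb R^{d_i}$ is a nonempty compact convex set, and $\mathcal X=\prod_i\mathcal X_i$. Each $v_i:\mathcal X\to\mathbb R$ is differentiable, with block gradient $\nabla_{\pi_i}v_i$. The norm is Euclidean, with $\|\pi\|^2=\sum_i\|\pi_i\|^2$. The game is monotone: $\sum_i\langle\nabla_{\pi_i}v_i(\pi)-\nabla_{\pi_i}v_i(\pi'),\pi_i-\pi_i'\rangle\le0$ for all $\pi,\pi'$. The game is $L$-smooth: $\sum_i\|\nabla_{\pi_i}v_i(\pi)-\nabla_{\pi_i}v_i(\pi')\|^2\le L^2\|\pi-\pi'\|^2$. Exploitability and diameter: $\mathrm{exploit}(\pi)=\sum_i(\max_{\tilde\pi_i\in\mathcal X_i}v_i(\tilde\pi_i,\pi_{-i})-v_i(\pi))$ and $\mathrm{diam}(\mathcal X)=\sup_{\pi,\pi'\in\mathcal X}\|\pi-\pi'\|$. Perturbed equilibrium. For $\mu>0$ and $\sigma\in\mathcal X$, $\pi^{\mu,\sigma}$ is the (unique) profile with $\pi_i^{\mu,\sigma}\in\arg\max_{\pi_i\in\mathcal X_i}\{v_i(\pi_i,\pi^{\mu,\sigma}_{-i})-\mu G(\pi_i,\sigma_i)\}$ for all $i$. *)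

theory Defs
  imports "HOL-Probability.Probability"
begin

text \<open>Strategy profiles: players are indexed by a finite type 'n, each player's strategy
lives in a common Euclidean space 'e, and a profile is an element of 'e ^ 'n, whose
Euclidean norm satisfies norm pi ^ 2 = sum of norm (pi $ i) ^ 2.\<close>

definition upd :: "('e ^ 'n) \<Rightarrow> 'n \<Rightarrow> 'e \<Rightarrow> ('e ^ 'n)" where
  "upd p i x = (\<chi> j. if j = i then x else p $ j)"

definition profiles :: "('n \<Rightarrow> 'e set) \<Rightarrow> ('e ^ 'n) set" where
  "profiles Xs = {p. \<forall>i. p $ i \<in> Xs i}"

definition exploit :: "('n::finite \<Rightarrow> ('e ^ 'n) \<Rightarrow> real) \<Rightarrow> ('n \<Rightarrow> 'e set) \<Rightarrow> ('e ^ 'n) \<Rightarrow> real" where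
  "exploit v Xs p = (\<Sum>i\<in>UNIV. (SUP y\<in>Xs i. v i (upd p i y)) - v i p)"

definition is_perturbed_eq ::
  "('n \<Rightarrow> ('e::real_normed_vector ^ 'n) \<Rightarrow> real) \<Rightarrow> ('n \<Rightarrow> 'e set) \<Rightarrow> real \<Rightarrow> ('e ^ 'n) \<Rightarrow> ('e ^ 'n) \<Rightarrow> bool" where
  "is_perturbed_eq v Xs \<mu> s p \<longleftrightarrow> p \<in> profiles Xs \<and>
     (\<forall>i. \<forall>y\<in>Xs i. v i (upd p i y) - \<mu> * (norm (y - s $ i))\<^sup>2 / 2
                    \<le> v i p - \<mu> * (norm (p $ i - s $ i))\<^sup>2 / 2)"

definition perturbed_eq ::
  "('n \<Rightarrow> ('e::real_normed_vector ^ 'n) \<Rightarrow> real) \<Rightarrow> ('n \<Rightarrow> 'e set) \<Rightarrow> real \<Rightarrow> ('e ^ 'n) \<Rightarrow> ('e ^ 'n)" where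
  "perturbed_eq v Xs \<mu> s = (THE p. is_perturbed_eq v Xs \<mu> s p)"

end

theory Submission imports Defs "HOL-Probability.Probability" begin

lemma upd_nth: "upd p i y $ j = (if j = i then y else p $ j)"
  unfolding upd_def by simp
lemma upd_self[simp]: "upd p i (p $ i) = p"
  unfolding upd_def by (simp add: vec_eq_iff)
lemma upd_upd[simp]: "upd (upd p i x) i y = upd p i y"
  unfolding upd_def by (simp add: vec_eq_iff)
lemma upd_same[simp]: "upd p i y $ i = y"
  unfolding upd_def by simp

lemma inner_upd: fixes a :: "'e::real_inner ^ 'n::finite"
  shows "a \<bullet> (upd p i y - p) = a $ i \<bullet> (y - p $ i)"
proof -
  have "a \<bullet> (upd p i y - p) = (\<Sum>j\<in>UNIV. a $ j \<bullet> (upd p i y - p) $ j)"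
    by (simp add: inner_vec_def)
  also have "\<dots> = (\<Sum>j\<in>UNIV. if j = i then a $ i \<bullet> (y - p $ i) else 0)"
    by (intro sum.cong) (auto simp: upd_nth)
  also have "\<dots> = a $ i \<bullet> (y - p $ i)" by simp
  finally show ?thesis .
qed

lemma prof_closed: fixes Xs :: "'n::finite \<Rightarrow> 'e::euclidean_space set"
  assumes "\<And>i. closed (Xs i)" shows "closed (profiles Xs)"
proof -
  have "profiles Xs = (\<Inter>i. (\<lambda>p. p $ i) -` Xs i)" unfolding profiles_def by auto
  moreover have "closed ((\<lambda>p. p $ i) -` Xs i)" for i
    by (rule closed_vimage_vec_nth[OF assms])
  ultimately show ?thesis by auto
qed

lemma prof_bounded: fixes Xs :: "'n::finite \<Rightarrow> 'e::euclidean_space set"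
  assumes "\<And>i. bounded (Xs i)" shows "bounded (profiles Xs)"
proof -
  obtain B where B: "\<And>i x. x \<in> Xs i \<Longrightarrow> norm x \<le> B i"
    using assms unfolding bounded_iff by metis
  have "norm p \<le> (\<Sum>i\<in>UNIV. B i)" if "p \<in> profiles Xs" for p
  proof -
    have "norm p = L2_set (\<lambda>i. norm (p $ i)) UNIV" by (simp add: norm_vec_def)
    also have "\<dots> \<le> (\<Sum>i\<in>UNIV. norm (p $ i))" by (rule L2_set_le_sum) auto
    also have "\<dots> \<le> (\<Sum>i\<in>UNIV. B i)"
      using that B unfolding profiles_def by (intro sum_mono) auto
    finally show ?thesis .
  qed
  then show ?thesis unfolding bounded_iff by blast
qed

lemma prof_convex: assumes "\<And>i. convex (Xs i)" shows "convex (profiles Xs)"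
  unfolding profiles_def convex_def
  using assms unfolding convex_def by auto

lemma prof_nonempty: assumes "\<And>i. Xs i \<noteq> {}" shows "profiles Xs \<noteq> {}"
proof -
  have "(\<chi> i. SOME x. x \<in> Xs i) \<in> profiles Xs"
    unfolding profiles_def using assms by (simp add: some_in_eq)
  then show ?thesis by auto
qed

lemma upd_in: "p \<in> profiles Xs \<Longrightarrow> y \<in> Xs i \<Longrightarrow> upd p i y \<in> profiles Xs"
  unfolding profiles_def by (auto simp: upd_nth)

definition Fv :: "('n \<Rightarrow> ('e ^ 'n) \<Rightarrow> 'e) \<Rightarrow> ('e ^ 'n) \<Rightarrow> ('e ^ 'n)" where
  "Fv gr p = (\<chi> i. gr i p)"

lemma Fv_inner: "(\<Sum>i\<in>UNIV. (gr i p - gr i q) \<bullet> (p $ i - q $ i)) = (Fv gr p - Fv gr q) \<bullet> (p - q)"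
  by (simp add: Fv_def inner_vec_def)

lemma Fv_norm2: "(\<Sum>i\<in>UNIV. (norm (gr i p - gr i q))\<^sup>2) = (norm (Fv gr p - Fv gr q))\<^sup>2"
  by (simp add: Fv_def norm_vec_def L2_set_def sum_nonneg)

lemma Fv_norm: "sqrt (\<Sum>i\<in>UNIV. (norm (gr i p))\<^sup>2) = norm (Fv gr p)"
  by (simp add: Fv_def norm_vec_def L2_set_def)



locale game =
  fixes Xs :: "'n::finite \<Rightarrow> 'e::euclidean_space set"
    and v :: "'n \<Rightarrow> ('e ^ 'n) \<Rightarrow> real"
    and gr :: "'n \<Rightarrow> ('e ^ 'n) \<Rightarrow> 'e"
    and L :: real
  assumes Xs: "\<And>i. Xs i \<noteq> {} \<and> compact (Xs i) \<and> convex (Xs i)"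
    and grad: "\<And>i p. p \<in> profiles Xs \<Longrightarrow>
        ((\<lambda>x. v i (upd p i x)) has_derivative (\<lambda>h. gr i p \<bullet> h)) (at (p $ i))"
    and monotone: "\<And>p q. p \<in> profiles Xs \<Longrightarrow> q \<in> profiles Xs \<Longrightarrow>
        (\<Sum>i\<in>UNIV. (gr i p - gr i q) \<bullet> (p $ i - q $ i)) \<le> 0"
    and L_nonneg: "L \<ge> 0"
    and smooth: "\<And>p q. p \<in> profiles Xs \<Longrightarrow> q \<in> profiles Xs \<Longrightarrow>
        (\<Sum>i\<in>UNIV. (norm (gr i p - gr i q))\<^sup>2) \<le> L\<^sup>2 * (norm (p - q))\<^sup>2"
begin

abbreviation "P \<equiv> profiles Xs"
abbreviation "F \<equiv> Fv gr"

lemma P_compact: "compact P"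
  unfolding compact_eq_bounded_closed
  using Xs by (intro conjI prof_bounded prof_closed) (auto intro: compact_imp_bounded compact_imp_closed)
lemma P_closed: "closed P" using P_compact compact_imp_closed by blast
lemma P_bounded: "bounded P" using P_compact compact_imp_bounded by blast
lemma P_convex: "convex P" using Xs by (intro prof_convex) auto
lemma P_ne: "P \<noteq> {}" using Xs by (intro prof_nonempty) auto

lemma F_mono: "p \<in> P \<Longrightarrow> q \<in> P \<Longrightarrow> (F p - F q) \<bullet> (p - q) \<le> 0"
  using monotone[of p q] Fv_inner[of gr p q] by simp

lemma F_lip: "p \<in> P \<Longrightarrow> q \<in> P \<Longrightarrow> norm (F p - F q) \<le> L * norm (p - q)"
proof -
  assume "p \<in> P" "q \<in> P"
  then have "(norm (F p - F q))\<^sup>2 \<le> (L * norm (p - q))\<^sup>2"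
  proof -
    have "(norm (F p - F q))\<^sup>2 = (\<Sum>i\<in>UNIV. (norm (gr i p - gr i q))\<^sup>2)"
      by (simp only: Fv_norm2)
    also have "\<dots> \<le> L\<^sup>2 * (norm (p - q))\<^sup>2" using smooth \<open>p \<in> P\<close> \<open>q \<in> P\<close> by blast
    also have "\<dots> = (L * norm (p - q))\<^sup>2" by (simp add: power_mult_distrib)
    finally show ?thesis .
  qed
  then show ?thesis by (rule power2_le_imp_le) (use L_nonneg in simp)
qed

lemma F_cont: "continuous_on P F"
proof (rule continuous_onI)
  fix x e assume "x \<in> P" "0 < (e::real)"
  show "\<exists>d>0. \<forall>x'\<in>P. dist x' x < d \<longrightarrow> dist (F x') (F x) \<le> e"
  proof (intro exI[of _ "e / (L + 1)"] conjI ballI impI)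
    show "0 < e / (L + 1)" using \<open>0 < e\<close> L_nonneg by auto
    fix x' assume "x' \<in> P" "dist x' x < e / (L + 1)"
    then have "dist (F x') (F x) \<le> L * dist x' x"
      using F_lip \<open>x \<in> P\<close> by (simp add: dist_norm)
    also have "\<dots> \<le> (L + 1) * dist x' x" by (intro mult_right_mono) auto
    also have "\<dots> \<le> e" using \<open>dist x' x < e / (L + 1)\<close> L_nonneg
      by (simp add: pos_less_divide_eq mult.commute less_imp_le)
    finally show "dist (F x') (F x) \<le> e" .
  qed
qed

lemma seg_in: assumes "p \<in> P" "y \<in> Xs i" "0 \<le> t" "t \<le> 1"
  shows "p $ i + t *\<^sub>R (y - p $ i) \<in> Xs i"
proof -
  have "p $ i \<in> Xs i" using assms unfolding profiles_def by auto
  then have "(1 - t) *\<^sub>R p $ i + t *\<^sub>R y \<in> Xs i"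
    using convexD_alt[of "Xs i" "p $ i" y t] Xs[of i] assms by simp
  moreover have "p $ i + t *\<^sub>R (y - p $ i) = (1 - t) *\<^sub>R p $ i + t *\<^sub>R y"
    by (simp add: scaleR_diff_right scaleR_diff_left)
  ultimately show ?thesis by simp
qed

lemma deriv_line: assumes "p \<in> P" "y \<in> Xs i" "0 \<le> t" "t \<le> 1"
  shows "((\<lambda>t. v i (upd p i (p $ i + t *\<^sub>R (y - p $ i)))) has_real_derivative
          gr i (upd p i (p $ i + t *\<^sub>R (y - p $ i))) \<bullet> (y - p $ i)) (at t)"
proof -
  let ?x = "p $ i + t *\<^sub>R (y - p $ i)"
  let ?q = "upd p i ?x"
  have q: "?q \<in> P" by (rule upd_in[OF assms(1) seg_in[OF assms]])
  have g: "((\<lambda>x. v i (upd p i x)) has_derivative (\<lambda>h. gr i ?q \<bullet> h)) (at ?x)"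
    using grad[OF q, of i] by simp
  have l: "((\<lambda>t. p $ i + t *\<^sub>R (y - p $ i)) has_derivative (\<lambda>h. h *\<^sub>R (y - p $ i))) (at t)"
    by (auto intro!: derivative_eq_intros)
  have "((\<lambda>t. v i (upd p i (p $ i + t *\<^sub>R (y - p $ i)))) has_derivative
          (\<lambda>h. gr i ?q \<bullet> (h *\<^sub>R (y - p $ i)))) (at t)"
    using diff_chain_at[OF l g] by (simp add: o_def)
  then show ?thesis unfolding has_field_derivative_def
    by (rule has_derivative_eq_rhs) (auto simp: fun_eq_iff)
qed


end

context game begin
lemma concave: assumes "p \<in> P" "y \<in> Xs i"
  shows "v i (upd p i y) \<le> v i p + gr i p \<bullet> (y - p $ i)"
proof -
  let ?phi = "\<lambda>t. v i (upd p i (p $ i + t *\<^sub>R (y - p $ i)))"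
  let ?d = "\<lambda>t. gr i (upd p i (p $ i + t *\<^sub>R (y - p $ i))) \<bullet> (y - p $ i)"
  have "\<exists>z. 0 < z \<and> z < 1 \<and> ?phi 1 - ?phi 0 = (1 - 0) * ?d z"
    by (rule MVT2[of 0 1 ?phi ?d, OF zero_less_one deriv_line[OF assms]])
  then obtain z where z: "0 < z" "z < 1" "?phi 1 - ?phi 0 = ?d z" by auto
  let ?q = "upd p i (p $ i + z *\<^sub>R (y - p $ i))"
  have q: "?q \<in> P" using z by (intro upd_in[OF assms(1) seg_in[OF assms]]) auto
  have "(F ?q - F p) \<bullet> (?q - p) = z * ((gr i ?q - gr i p) \<bullet> (y - p $ i))"
    using inner_upd[of "F ?q - F p" p i] by (simp add: Fv_def)
  moreover have "(F ?q - F p) \<bullet> (?q - p) \<le> 0" using F_mono[OF q assms(1)] .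
  ultimately have "z * ((gr i ?q - gr i p) \<bullet> (y - p $ i)) \<le> 0" by simp
  then have "(gr i ?q - gr i p) \<bullet> (y - p $ i) \<le> 0"
    using z by (simp add: mult_le_0_iff)
  then have "?d z \<le> gr i p \<bullet> (y - p $ i)" by (simp add: inner_diff_left)
  then show ?thesis using z by simp
qed

end

context game begin

definition VI :: "real \<Rightarrow> ('e ^ 'n) \<Rightarrow> ('e ^ 'n) \<Rightarrow> bool" where
  "VI \<mu> s p \<longleftrightarrow> p \<in> P \<and> (\<forall>q\<in>P. (F p - \<mu> *\<^sub>R (p - s)) \<bullet> (q - p) \<le> 0)"

lemma norm_line: "(norm (a + t *\<^sub>R w))\<^sup>2 = (norm a)\<^sup>2 + 2 * t * (a \<bullet> w) + t\<^sup>2 * (norm w)\<^sup>2"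
  unfolding power2_norm_eq_inner by (simp add: inner_add_left inner_add_right inner_commute power2_eq_square algebra_simps)

lemma foc1: assumes eq: "is_perturbed_eq v Xs \<mu> s p" and y: "y \<in> Xs i"
  shows "(gr i p - \<mu> *\<^sub>R (p $ i - s $ i)) \<bullet> (y - p $ i) \<le> 0"
proof (rule ccontr)
  assume neg: "\<not> ?thesis"
  have p: "p \<in> P" using eq unfolding is_perturbed_eq_def by auto
  define a where "a = p $ i - s $ i"
  define w where "w = y - p $ i"
  let ?psi = "\<lambda>t. v i (upd p i (p $ i + t *\<^sub>R w)) - \<mu> * ((norm a)\<^sup>2 + 2 * t * (a \<bullet> w) + t\<^sup>2 * (norm w)\<^sup>2) / 2"
  have dv: "((\<lambda>t. v i (upd p i (p $ i + t *\<^sub>R w))) has_real_derivative gr i p \<bullet> w) (at 0)"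
    using deriv_line[OF p y, of 0] unfolding w_def by simp
  have dq: "((\<lambda>t. \<mu> * ((norm a)\<^sup>2 + 2 * t * (a \<bullet> w) + t\<^sup>2 * (norm w)\<^sup>2) / 2) has_real_derivative \<mu> * (a \<bullet> w)) (at 0)"
    by (auto intro!: derivative_eq_intros)
  have d: "(?psi has_real_derivative gr i p \<bullet> w - \<mu> * (a \<bullet> w)) (at 0)"
    using DERIV_diff[OF dv dq] by simp
  have pos: "0 < gr i p \<bullet> w - \<mu> * (a \<bullet> w)"
    using neg unfolding a_def w_def by (simp add: inner_diff_left)
  obtain d where d0: "d > 0" and dd: "\<And>h. h > 0 \<Longrightarrow> h < d \<Longrightarrow> ?psi 0 < ?psi (0 + h)"
    using DERIV_pos_inc_right[OF d pos] by blast
  define h where "h = min (d / 2) 1"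
  have h: "h > 0" "h < d" "h \<le> 1" using d0 unfolding h_def by auto
  have "?psi 0 < ?psi h" using dd[OF h(1,2)] by simp
  moreover have "p $ i + h *\<^sub>R w \<in> Xs i" unfolding w_def using seg_in[OF p y] h by auto
  then have "v i (upd p i (p $ i + h *\<^sub>R w)) - \<mu> * (norm (p $ i + h *\<^sub>R w - s $ i))\<^sup>2 / 2
      \<le> v i p - \<mu> * (norm (p $ i - s $ i))\<^sup>2 / 2"
    using eq unfolding is_perturbed_eq_def by blast
  moreover have "p $ i + h *\<^sub>R w - s $ i = a + h *\<^sub>R w" unfolding a_def by simp
  ultimately have "?psi 0 < ?psi h"
     "v i (upd p i (p $ i + h *\<^sub>R w)) - \<mu> * (norm (a + h *\<^sub>R w))\<^sup>2 / 2
      \<le> v i p - \<mu> * (norm a)\<^sup>2 / 2" unfolding a_def by auto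
  moreover have "?psi 0 = v i p - \<mu> * (norm a)\<^sup>2 / 2" by simp
  ultimately show False unfolding norm_line by linarith
qed

lemma foc: assumes eq: "is_perturbed_eq v Xs \<mu> s p" shows "VI \<mu> s p"
proof -
  have p: "p \<in> P" using eq unfolding is_perturbed_eq_def by auto
  have "(F p - \<mu> *\<^sub>R (p - s)) \<bullet> (q - p) \<le> 0" if q: "q \<in> P" for q
  proof -
    have "(F p - \<mu> *\<^sub>R (p - s)) \<bullet> (q - p) =
        (\<Sum>i\<in>UNIV. (gr i p - \<mu> *\<^sub>R (p $ i - s $ i)) \<bullet> (q $ i - p $ i))"
      by (simp add: inner_vec_def Fv_def)
    also have "\<dots> \<le> 0"
      using q by (intro sum_nonpos foc1[OF eq]) (auto simp: profiles_def)
    finally show ?thesis .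
  qed
  then show ?thesis using p unfolding VI_def by auto
qed

lemma suff: assumes vi: "VI \<mu> s p" and mu: "\<mu> > 0" shows "is_perturbed_eq v Xs \<mu> s p"
proof -
  have p: "p \<in> P" using vi unfolding VI_def by auto
  have "v i (upd p i y) - \<mu> * (norm (y - s $ i))\<^sup>2 / 2 \<le> v i p - \<mu> * (norm (p $ i - s $ i))\<^sup>2 / 2"
    if y: "y \<in> Xs i" for i y
  proof -
    define a where "a = p $ i - s $ i"
    define w where "w = y - p $ i"
    have "(F p - \<mu> *\<^sub>R (p - s)) \<bullet> (upd p i y - p) \<le> 0"
      using vi upd_in[OF p y] unfolding VI_def by blast
    then have 1: "gr i p \<bullet> w - \<mu> * (a \<bullet> w) \<le> 0"
      using inner_upd[of "F p - \<mu> *\<^sub>R (p - s)" p i y] unfolding a_def w_def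
      by (simp add: Fv_def inner_diff_left)
    have 2: "v i (upd p i y) \<le> v i p + gr i p \<bullet> w"
      using concave[OF p y] unfolding w_def .
    have 3: "y - s $ i = a + 1 *\<^sub>R w" unfolding a_def w_def by simp
    have "(norm (y - s $ i))\<^sup>2 = (norm a)\<^sup>2 + 2 * (a \<bullet> w) + (norm w)\<^sup>2"
      unfolding 3 norm_line by simp
    then have e: "\<mu> * (norm (y - s $ i))\<^sup>2 = \<mu> * (norm a)\<^sup>2 + 2 * (\<mu> * (a \<bullet> w)) + \<mu> * (norm w)\<^sup>2"
      by (simp add: algebra_simps)
    have nn: "0 \<le> \<mu> * (norm w)\<^sup>2" using mu by simp
    show ?thesis using 1 2 e nn unfolding a_def[symmetric] by linarith
  qed
  then show ?thesis using p unfolding is_perturbed_eq_def by auto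
qed

lemma VI_unique: assumes "VI \<mu> s p" "VI \<mu> s p'" "\<mu> > 0" shows "p = p'"
proof -
  have p: "p \<in> P" and p': "p' \<in> P" using assms unfolding VI_def by auto
  have 1: "(F p - \<mu> *\<^sub>R (p - s)) \<bullet> (p' - p) \<le> 0" using assms p' unfolding VI_def by auto
  have 2: "(F p' - \<mu> *\<^sub>R (p' - s)) \<bullet> (p - p') \<le> 0" using assms p unfolding VI_def by auto
  have 3: "(F p - F p') \<bullet> (p - p') \<le> 0" using F_mono[OF p p'] .
  have "\<mu> * ((p - p') \<bullet> (p - p')) = (F p - F p') \<bullet> (p - p') + (F p - \<mu> *\<^sub>R (p - s)) \<bullet> (p' - p) + (F p' - \<mu> *\<^sub>R (p' - s)) \<bullet> (p - p')"
    by (simp add: inner_diff_left inner_diff_right inner_commute algebra_simps)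
  also have "\<dots> \<le> 0" using 1 2 3 by simp
  finally have "(p - p') \<bullet> (p - p') \<le> 0" using assms(3) by (simp add: mult_le_0_iff)
  then show ?thesis by (metis inner_eq_zero_iff inner_ge_zero eq_iff_diff_eq_0 order_antisym)
qed

lemma VI_exists: assumes mu: "\<mu> > 0" shows "\<exists>p. VI \<mu> s p"
proof -
  define T where "T = (\<lambda>z. closest_point P (z + (F z - \<mu> *\<^sub>R (z - s))))"
  have c1: "continuous_on P (\<lambda>z. z + (F z - \<mu> *\<^sub>R (z - s)))"
    by (intro continuous_intros F_cont)
  have cT: "continuous_on P T" unfolding T_def
    by (rule continuous_on_compose2[OF continuous_on_closest_point[OF P_convex P_closed P_ne] c1])
       auto
  have TP: "T \<in> P \<rightarrow> P" unfolding T_def using closest_point_in_set[OF P_closed P_ne] by auto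
  obtain z where z: "z \<in> P" "T z = z" using brouwer[OF P_compact P_convex P_ne cT TP] by blast
  have "(F z - \<mu> *\<^sub>R (z - s)) \<bullet> (q - z) \<le> 0" if "q \<in> P" for q
    using closest_point_dot[OF P_convex P_closed that, of "z + (F z - \<mu> *\<^sub>R (z - s))"] z(2)
    unfolding T_def by simp
  then show ?thesis using z unfolding VI_def by blast
qed

lemma PE: assumes mu: "\<mu> > 0" shows "VI \<mu> s (perturbed_eq v Xs \<mu> s)"
proof -
  obtain p where p: "VI \<mu> s p" using VI_exists[OF mu] by blast
  have "\<exists>!p. is_perturbed_eq v Xs \<mu> s p"
    using p suff[OF _ mu] foc VI_unique[OF _ _ mu] by blast
  then have "is_perturbed_eq v Xs \<mu> s (perturbed_eq v Xs \<mu> s)"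
    unfolding perturbed_eq_def by (rule theI')
  then show ?thesis by (rule foc)
qed

end


lemma delta_bound:
  fixes K T :: nat and c :: real
  assumes K: "K \<ge> 3" and T: "real T \<ge> real K ^ 4" and c: "c > 0"
  shows "c * sqrt (ln (real T) / real T) \<le> 2 * c * sqrt (ln (real K)) / (real K)\<^sup>2"
proof -
  have K4: "exp 1 \<le> real K ^ 4"
  proof -
    have "exp 1 \<le> (3::real)" by (rule exp_le)
    also have "(3::real) \<le> real K" using K by simp
    also have "real K \<le> real K ^ 4" using K by (intro self_le_power) auto
    finally show ?thesis .
  qed
  have "ln (real T) / real T \<le> ln (real K ^ 4) / real K ^ 4"
    by (rule ln_x_over_x_mono[OF K4 T])
  also have "ln (real K ^ 4) = 4 * ln (real K)" using K by (simp add: ln_realpow)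
  finally have 1: "ln (real T) / real T \<le> 4 * ln (real K) / real K ^ 4" .
  have "sqrt (ln (real T) / real T) \<le> sqrt (4 * ln (real K) / real K ^ 4)"
    using 1 by (rule real_sqrt_le_mono)
  also have "sqrt (4 * ln (real K) / real K ^ 4) = 2 * sqrt (ln (real K)) / (real K)\<^sup>2"
  proof -
    have "real K ^ 4 = ((real K)\<^sup>2)\<^sup>2" by simp
    then have "sqrt (real K ^ 4) = (real K)\<^sup>2" by (simp only: real_sqrt_abs abs_power2)
    moreover have "sqrt 4 = (2::real)" by (simp add: real_sqrt_eq_iff)
    ultimately show ?thesis by (simp add: real_sqrt_divide real_sqrt_mult)
  qed
  finally have "c * sqrt (ln (real T) / real T) \<le> c * (2 * sqrt (ln (real K)) / (real K)\<^sup>2)"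
    using c by (intro mult_left_mono) auto
  then show ?thesis by (simp add: mult.assoc mult.left_commute)
qed

lemma lnK_ge1: assumes "K \<ge> (3::nat)" shows "1 \<le> ln (real K)"
proof -
  have "(3::real) \<le> real K" using assms by simp
  then have "exp 1 \<le> real K" using exp_le by linarith
  then have "ln (exp 1) \<le> ln (real K)" using assms by (subst ln_le_cancel_iff) auto
  then show ?thesis by simp
qed

lemma final_num:
  fixes K T :: nat and c D L \<zeta> \<mu> \<delta> :: real
  assumes K: "K \<ge> 3" and T: "real T \<ge> real K ^ 4" and c: "c > 0" and D: "D \<ge> 0"
    and L: "L \<ge> 0" and z: "\<zeta> \<ge> 0" and mu: "\<mu> > 0"
    and dl: "\<delta> = c * sqrt (ln (real T) / real T)"
  shows "\<mu> * D * ((real K - 1) * \<delta> + (D + 3/2 * (real K * \<delta>)) / sqrt (real K)) + (L * D + \<zeta>) * \<delta>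
    \<le> (2 * (D * (c * L + \<mu> * sqrt c * sqrt (2 * D + \<zeta> / \<mu> + c)) + c * \<zeta>) * ln (real K) + \<mu> * D\<^sup>2) / sqrt (real K)"
proof -
  define l where "l = ln (real K)"
  define q where "q = sqrt l"
  define sk where "sk = sqrt (real K)"
  have l1: "1 \<le> l" unfolding l_def using lnK_ge1[OF K] .
  have q1: "1 \<le> q" unfolding q_def using l1 by simp
  have qq: "q * q = l" unfolding q_def using l1 by simp
  have "q * 1 \<le> q * q" using q1 by (intro mult_left_mono) auto
  then have ql: "q \<le> l" using qq by simp
  have Kpos: "real K > 0" using K by simp
  have sk0: "sk > 0" unfolding sk_def using Kpos by simp
  have sksq: "sk * sk = real K" unfolding sk_def using Kpos by simp
  have "1 \<le> real K ^ 4" using K by (intro one_le_power) auto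
  then have "1 \<le> real T" using T by linarith
  then have "0 \<le> ln (real T) / real T" by simp
  then have d0: "0 \<le> \<delta>" unfolding dl using c by simp
  have db: "\<delta> \<le> 2 * c * q / (real K)\<^sup>2" unfolding dl q_def l_def using delta_bound[OF K T c] .
  have skle: "sk \<le> (real K + 1) / 2"
  proof -
    have "0 \<le> (sk - 1)\<^sup>2" by simp
    then show ?thesis using sksq by (simp add: power2_eq_square algebra_simps)
  qed
  have Kq: "(real K - 1) * sk + 3/2 * real K \<le> (real K)\<^sup>2"
  proof -
    have "(real K - 1) * sk \<le> (real K - 1) * ((real K + 1) / 2)" using skle K by (intro mult_left_mono) auto
    moreover have "(real K - 1) * ((real K + 1) / 2) + 3/2 * real K \<le> (real K)\<^sup>2"
    proof -
      have "real K * (real K - 3) \<ge> 0" using K by simp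
      then have h: "3 * real K \<le> real K * real K" by (simp add: algebra_simps)
      have "(real K - 1) * ((real K + 1) / 2) = 1/2 * (real K * real K) - 1/2" by (simp add: algebra_simps add_divide_distrib diff_divide_distrib)
      then show ?thesis using h unfolding power2_eq_square by linarith
    qed
    ultimately show ?thesis by linarith
  qed
  have i1: "\<delta> * ((real K - 1) * sk + 3/2 * real K) \<le> 2 * c * l"
  proof -
    have "\<delta> * ((real K - 1) * sk + 3/2 * real K) \<le> (2 * c * q / (real K)\<^sup>2) * (real K)\<^sup>2"
      using db Kq d0 K sk0 by (intro mult_mono) auto
    also have "\<dots> = 2 * c * q" using Kpos by simp
    also have "\<dots> \<le> 2 * c * l" using ql c by simp
    finally show ?thesis .
  qed
  have ceq: "c \<le> sqrt c * sqrt (2 * D + \<zeta> / \<mu> + c)"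
  proof -
    have "c = sqrt c * sqrt c" using c by simp
    also have "\<dots> \<le> sqrt c * sqrt (2 * D + \<zeta> / \<mu> + c)"
      using D z mu c by (intro mult_left_mono real_sqrt_le_mono) auto
    finally show ?thesis .
  qed
  have i: "(real K - 1) * \<delta> + 3/2 * (real K * \<delta>) / sk \<le> 2 * l * (sqrt c * sqrt (2 * D + \<zeta> / \<mu> + c)) / sk"
  proof -
    have e1: "real K * \<delta> / sk = \<delta> * sk" using sksq sk0
      by (metis nonzero_mult_div_cancel_left less_irrefl mult.commute mult.left_commute)
    have "((real K - 1) * \<delta> + 3/2 * (real K * \<delta>) / sk) * sk = \<delta> * ((real K - 1) * sk + 3/2 * (sk * sk))"
      using e1 sksq sk0 by (simp add: algebra_simps)
    also have "\<dots> \<le> 2 * c * l" using i1 sksq by simp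
    finally have "(real K - 1) * \<delta> + 3/2 * (real K * \<delta>) / sk \<le> 2 * c * l / sk"
      using sk0 by (simp add: pos_le_divide_eq)
    also have "\<dots> \<le> 2 * l * (sqrt c * sqrt (2 * D + \<zeta> / \<mu> + c)) / sk"
      using ceq l1 sk0 by (intro divide_right_mono) (auto simp: mult.commute mult.left_commute)
    finally show ?thesis .
  qed
  have ii: "\<delta> \<le> 2 * c * l / sk"
  proof -
    have "\<delta> \<le> 2 * c * q / (real K)\<^sup>2" by (rule db)
    also have "\<dots> \<le> 2 * c * l / (real K)\<^sup>2" using ql c by (intro divide_right_mono) auto
    also have "\<dots> \<le> 2 * c * l / sk"
    proof (rule divide_left_mono)
      show "sk \<le> (real K)\<^sup>2"
      proof -
        have "1 \<le> real K" using K by simp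
        then have "1 \<le> sk" unfolding sk_def by simp
        then have "sk * 1 \<le> sk * sk" by (intro mult_left_mono) auto
        also have "\<dots> = real K" by (rule sksq)
        also have "real K * 1 \<le> real K * real K" using \<open>1 \<le> real K\<close> by (intro mult_left_mono) auto
        finally show ?thesis by (simp add: power2_eq_square)
      qed
    qed (use c l1 sk0 Kpos in auto)
    finally show ?thesis .
  qed
  have A: "\<mu> * D * ((real K - 1) * \<delta> + 3/2 * (real K * \<delta>) / sk) \<le> \<mu> * D * (2 * l * (sqrt c * sqrt (2 * D + \<zeta> / \<mu> + c)) / sk)"
    using i mu D by (intro mult_left_mono) auto
  have B: "(L * D + \<zeta>) * \<delta> \<le> (L * D + \<zeta>) * (2 * c * l / sk)"
    using ii L D z by (intro mult_left_mono) auto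
  have "\<mu> * D * ((real K - 1) * \<delta> + (D + 3/2 * (real K * \<delta>)) / sk) + (L * D + \<zeta>) * \<delta>
      = \<mu> * D * D / sk + \<mu> * D * ((real K - 1) * \<delta> + 3/2 * (real K * \<delta>) / sk) + (L * D + \<zeta>) * \<delta>"
    by (simp add: add_divide_distrib algebra_simps)
  also have "\<dots> \<le> \<mu> * D * D / sk + \<mu> * D * (2 * l * (sqrt c * sqrt (2 * D + \<zeta> / \<mu> + c)) / sk) + (L * D + \<zeta>) * (2 * c * l / sk)"
    using A B by linarith
  also have "\<dots> = (\<mu> * D * D + \<mu> * D * (2 * l * (sqrt c * sqrt (2 * D + \<zeta> / \<mu> + c))) + (L * D + \<zeta>) * (2 * c * l)) / sk"
    by (simp only: add_divide_distrib times_divide_eq_right)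
  also have "\<mu> * D * D + \<mu> * D * (2 * l * (sqrt c * sqrt (2 * D + \<zeta> / \<mu> + c))) + (L * D + \<zeta>) * (2 * c * l)
     = 2 * (D * (c * L + \<mu> * sqrt c * sqrt (2 * D + \<zeta> / \<mu> + c)) + c * \<zeta>) * l + \<mu> * D\<^sup>2"
    by (simp add: algebra_simps power2_eq_square)
  finally show ?thesis unfolding sk_def l_def .
qed



locale gamemu = game +
  fixes \<mu> :: real
  assumes mu: "\<mu> > 0"
begin

lemma nsq: "(norm (u + w))\<^sup>2 = (norm u)\<^sup>2 + 2 * (u \<bullet> w) + (norm w)\<^sup>2"
  unfolding power2_norm_eq_inner by (simp add: inner_add_left inner_add_right inner_commute)

abbreviation "Pe \<equiv> perturbed_eq v Xs \<mu>"

lemma Pe_VI: "VI \<mu> s (Pe s)" using PE[OF mu] .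
lemma Pe_in: "Pe s \<in> P" using Pe_VI unfolding VI_def by auto

lemma firm: "(norm (Pe a - Pe b))\<^sup>2 \<le> (a - b) \<bullet> (Pe a - Pe b)"
proof -
  let ?p = "Pe a" and ?p' = "Pe b"
  have 1: "(F ?p - \<mu> *\<^sub>R (?p - a)) \<bullet> (?p' - ?p) \<le> 0" using Pe_VI[of a] Pe_in[of b] unfolding VI_def by auto
  have 2: "(F ?p' - \<mu> *\<^sub>R (?p' - b)) \<bullet> (?p - ?p') \<le> 0" using Pe_VI[of b] Pe_in[of a] unfolding VI_def by auto
  have 3: "(F ?p - F ?p') \<bullet> (?p - ?p') \<le> 0" using F_mono[OF Pe_in Pe_in] .
  have "\<mu> * ((?p - ?p') \<bullet> (?p - ?p')) - \<mu> * ((a - b) \<bullet> (?p - ?p')) = (F ?p - F ?p') \<bullet> (?p - ?p') + (F ?p - \<mu> *\<^sub>R (?p - a)) \<bullet> (?p' - ?p) + (F ?p' - \<mu> *\<^sub>R (?p' - b)) \<bullet> (?p - ?p')"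
    by (simp add: inner_diff_left inner_diff_right inner_commute algebra_simps)
  also have "\<dots> \<le> 0" using 1 2 3 by simp
  finally have "\<mu> * ((?p - ?p') \<bullet> (?p - ?p')) \<le> \<mu> * ((a - b) \<bullet> (?p - ?p'))" by simp
  then have "(?p - ?p') \<bullet> (?p - ?p') \<le> (a - b) \<bullet> (?p - ?p')" using mu by simp
  then show ?thesis by (simp add: power2_norm_eq_inner)
qed

lemma nonexp: "norm (Pe a - Pe b) \<le> norm (a - b)"
proof -
  have "(norm (Pe a - Pe b))\<^sup>2 \<le> norm (a - b) * norm (Pe a - Pe b)"
    using firm[of a b] Cauchy_Schwarz_ineq2[of "a - b" "Pe a - Pe b"] by linarith
  then show ?thesis
    by (metis mult_le_cancel_right norm_ge_zero not_le power2_eq_square mult_zero_right le_less)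
qed

lemma res_nonexp: "norm ((a - Pe a) - (b - Pe b)) \<le> norm (a - b)"
proof -
  have "(norm ((a - b) - (Pe a - Pe b)))\<^sup>2 = (norm (a - b))\<^sup>2 - 2 * ((a - b) \<bullet> (Pe a - Pe b)) + (norm (Pe a - Pe b))\<^sup>2"
    unfolding power2_norm_eq_inner by (simp add: inner_diff_left inner_diff_right inner_commute)
  also have "\<dots> \<le> (norm (a - b))\<^sup>2" using firm[of a b] zero_le_power2[of "norm (Pe a - Pe b)"] by linarith
  finally have "(norm ((a - b) - (Pe a - Pe b)))\<^sup>2 \<le> (norm (a - b))\<^sup>2" .
  then have "norm ((a - b) - (Pe a - Pe b)) \<le> norm (a - b)"
    by (rule power2_le_imp_le) simp
  then show ?thesis by (simp add: algebra_simps)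
qed

lemma Pe_cont: "continuous_on S Pe"
proof (rule continuous_onI)
  fix x e assume "x \<in> S" "0 < (e::real)"
  show "\<exists>d>0. \<forall>x'\<in>S. dist x' x < d \<longrightarrow> dist (Pe x') (Pe x) \<le> e"
  proof (intro exI[of _ e] conjI ballI impI)
    fix x' assume "dist x' x < e"
    then show "dist (Pe x') (Pe x) \<le> e" using nonexp[of x' x] by (simp add: dist_norm)
  qed (use \<open>0 < e\<close> in auto)
qed

lemma fixpt: obtains x where "x \<in> P" "Pe x = x"
  using brouwer[OF P_compact P_convex P_ne Pe_cont] Pe_in by blast

lemma fejer: assumes "Pe x = x"
  shows "(norm (Pe a - x))\<^sup>2 + (norm (a - Pe a))\<^sup>2 \<le> (norm (a - x))\<^sup>2"
proof -
  have f: "(norm (Pe a - Pe x))\<^sup>2 \<le> (a - x) \<bullet> (Pe a - Pe x)" using firm .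
  have e: "(norm (a - x))\<^sup>2 = (norm (Pe a - x))\<^sup>2 + 2 * ((Pe a - x) \<bullet> (a - Pe a)) + (norm (a - Pe a))\<^sup>2"
    using nsq[of "Pe a - x" "a - Pe a"] by simp
  have "(Pe a - x) \<bullet> (a - Pe a) = (a - x) \<bullet> (Pe a - x) - (norm (Pe a - x))\<^sup>2"
    unfolding power2_norm_eq_inner by (simp add: inner_diff_left inner_diff_right inner_commute algebra_simps)
  then have "(Pe a - x) \<bullet> (a - Pe a) \<ge> 0" using f assms by simp
  then show ?thesis using e by simp
qed

lemma exploit_lin: assumes p: "p \<in> P" obtains q where "q \<in> P" "exploit v Xs p \<le> F p \<bullet> (q - p)"
proof -
  have "\<forall>i. \<exists>y. y \<in> Xs i \<and> (\<forall>z\<in>Xs i. gr i p \<bullet> (z - p $ i) \<le> gr i p \<bullet> (y - p $ i))"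
  proof
    fix i
    have "continuous_on (Xs i) (\<lambda>z. gr i p \<bullet> (z - p $ i))" by (intro continuous_intros)
    then show "\<exists>y. y \<in> Xs i \<and> (\<forall>z\<in>Xs i. gr i p \<bullet> (z - p $ i) \<le> gr i p \<bullet> (y - p $ i))"
      using continuous_attains_sup[of "Xs i"] Xs[of i] by blast
  qed
  then obtain yo where yo: "\<And>i. yo i \<in> Xs i" "\<And>i z. z \<in> Xs i \<Longrightarrow> gr i p \<bullet> (z - p $ i) \<le> gr i p \<bullet> (yo i - p $ i)"
    by metis
  define q where "q = (\<chi> i. yo i)"
  have q: "q \<in> P" unfolding q_def profiles_def using yo by simp
  have "(SUP y\<in>Xs i. v i (upd p i y)) \<le> v i p + gr i p \<bullet> (q $ i - p $ i)" for i
  proof (rule cSUP_least)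
    show "Xs i \<noteq> {}" using Xs by auto
    fix y assume "y \<in> Xs i"
    then show "v i (upd p i y) \<le> v i p + gr i p \<bullet> (q $ i - p $ i)"
      using concave[OF p] yo(2)[of y i] unfolding q_def by (smt (verit) vec_lambda_beta)
  qed
  then have "exploit v Xs p \<le> (\<Sum>i\<in>UNIV. gr i p \<bullet> (q $ i - p $ i))"
    unfolding exploit_def by (intro sum_mono) (smt (verit))
  also have "\<dots> = F p \<bullet> (q - p)" by (simp add: inner_vec_def Fv_def)
  finally show ?thesis using q that by blast
qed

end


context gamemu begin

abbreviation "Dm \<equiv> diameter P"

lemma dist_P: "a \<in> P \<Longrightarrow> b \<in> P \<Longrightarrow> norm (a - b) \<le> Dm"
  using diameter_bounded_bound[OF P_bounded] by (simp add: dist_norm)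

lemma Dm_nonneg: "0 \<le> Dm"
  using P_ne dist_P[of _ _] by (metis all_not_in_conv norm_ge_zero order_trans)

lemma exploit_approx:
  assumes s: "s \<in> P" and sg: "sg \<in> P" and z: "\<And>p. p \<in> P \<Longrightarrow> norm (F p) \<le> \<zeta>"
  shows "exploit v Xs sg \<le> \<mu> * Dm * norm (Pe s - s) + (L * Dm + \<zeta>) * norm (Pe s - sg)"
proof -
  obtain q where q: "q \<in> P" and ex: "exploit v Xs sg \<le> F sg \<bullet> (q - sg)" using exploit_lin[OF sg] by blast
  define p where "p = Pe s"
  have p: "p \<in> P" unfolding p_def by (rule Pe_in)
  have split: "F sg \<bullet> (q - sg) = F p \<bullet> (q - p) + (F sg - F p) \<bullet> (q - sg) + F p \<bullet> (p - sg)"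
    by (simp add: inner_diff_left inner_diff_right algebra_simps)
  have "(F p - \<mu> *\<^sub>R (p - s)) \<bullet> (q - p) \<le> 0" using Pe_VI[of s] q unfolding VI_def p_def by auto
  then have "F p \<bullet> (q - p) \<le> \<mu> * ((p - s) \<bullet> (q - p))" by (simp add: inner_diff_left)
  also have "\<dots> \<le> \<mu> * (norm (p - s) * norm (q - p))"
    using mu by (intro mult_left_mono norm_cauchy_schwarz) auto
  also have "\<dots> \<le> \<mu> * (norm (p - s) * Dm)"
    using mu dist_P[OF q p] by (intro mult_left_mono) auto
  finally have 1: "F p \<bullet> (q - p) \<le> \<mu> * Dm * norm (Pe s - s)" unfolding p_def by (simp add: algebra_simps)
  have "(F sg - F p) \<bullet> (q - sg) \<le> norm (F sg - F p) * norm (q - sg)" by (rule norm_cauchy_schwarz)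
  also have "\<dots> \<le> (L * norm (sg - p)) * Dm"
    using F_lip[OF sg p] dist_P[OF q sg] L_nonneg by (intro mult_mono) auto
  finally have 2: "(F sg - F p) \<bullet> (q - sg) \<le> L * Dm * norm (Pe s - sg)"
    unfolding p_def by (simp add: norm_minus_commute algebra_simps)
  have "F p \<bullet> (p - sg) \<le> norm (F p) * norm (p - sg)" by (rule norm_cauchy_schwarz)
  also have "\<dots> \<le> \<zeta> * norm (p - sg)" using z[OF p] by (intro mult_right_mono) auto
  finally have 3: "F p \<bullet> (p - sg) \<le> \<zeta> * norm (Pe s - sg)" unfolding p_def .
  show ?thesis using ex split 1 2 3 by (simp add: algebra_simps)
qed

lemma traj:
  assumes sP: "\<And>k. k \<le> Suc n \<Longrightarrow> s k \<in> P"
  defines "r \<equiv> \<lambda>k. norm (Pe (s k) - s k)"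
  defines "e \<equiv> \<lambda>k. norm (Pe (s k) - s (Suc k))"
  shows "r n \<le> (\<Sum>k<n. e k) + (Dm + 3/2 * (\<Sum>k<Suc n. e k)) / sqrt (real (Suc n))"
proof -
  have e0: "0 \<le> e k" for k unfolding e_def by simp
  have r0: "0 \<le> r k" for k unfolding r_def by simp
  have step: "r (Suc k) \<le> r k + e k" for k
  proof -
    let ?y = "Pe (s k)"
    have "norm ((s (Suc k) - Pe (s (Suc k))) - (?y - Pe ?y)) \<le> norm (s (Suc k) - ?y)" by (rule res_nonexp)
    moreover have "norm (?y - Pe ?y) \<le> r k" unfolding r_def
      using nonexp[of "s k" ?y] by (simp add: norm_minus_commute)
    moreover have "r (Suc k) \<le> norm ((s (Suc k) - Pe (s (Suc k))) - (?y - Pe ?y)) + norm (?y - Pe ?y)"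
      unfolding r_def using norm_triangle_ineq[of "(s (Suc k) - Pe (s (Suc k))) - (?y - Pe ?y)" "?y - Pe ?y"]
      by (simp add: norm_minus_commute)
    ultimately show ?thesis unfolding e_def by (simp add: norm_minus_commute)
  qed
  have chain: "r (k + m) \<le> r k + (\<Sum>j\<in>{k..<k+m}. e j)" for k m
  proof (induction m)
    case 0 then show ?case by simp
  next
    case (Suc m)
    then show ?case using step[of "k + m"] by simp
  qed
  have bnd: "r n - (\<Sum>k<n. e k) \<le> r k" if "k < Suc n" for k
  proof -
    have "r n \<le> r k + (\<Sum>j\<in>{k..<n}. e j)" using chain[of k "n - k"] that by simp
    also have "(\<Sum>j\<in>{k..<n}. e j) \<le> (\<Sum>j<n. e j)"
      by (rule sum_mono2) (auto simp: e0)
    finally show ?thesis by simp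
  qed
  obtain x where x: "x \<in> P" "Pe x = x" using fixpt by blast
  have sq: "(r k)\<^sup>2 \<le> (norm (s k - x))\<^sup>2 - (norm (s (Suc k) - x))\<^sup>2 + 3 * Dm * e k" if "k < Suc n" for k
  proof -
    let ?y = "Pe (s k)"
    have f: "(norm (?y - x))\<^sup>2 + (r k)\<^sup>2 \<le> (norm (s k - x))\<^sup>2"
      using fejer[OF x(2), of "s k"] unfolding r_def by (simp add: norm_minus_commute)
    have "(norm (s (Suc k) - x))\<^sup>2 = (norm ((?y - x) + (s (Suc k) - ?y)))\<^sup>2" by simp
    also have "\<dots> = (norm (?y - x))\<^sup>2 + 2 * ((?y - x) \<bullet> (s (Suc k) - ?y)) + (e k)\<^sup>2"
      unfolding nsq e_def by (simp add: norm_minus_commute)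
    finally have eq: "(norm (s (Suc k) - x))\<^sup>2 = (norm (?y - x))\<^sup>2 + 2 * ((?y - x) \<bullet> (s (Suc k) - ?y)) + (e k)\<^sup>2" .
    have sk1: "s (Suc k) \<in> P" using sP that by simp
    have "(?y - x) \<bullet> (s (Suc k) - ?y) \<le> norm (?y - x) * norm (s (Suc k) - ?y)" by (rule norm_cauchy_schwarz)
    also have "\<dots> \<le> Dm * e k" unfolding e_def
      using dist_P[OF Pe_in x(1), of "s k"] by (simp add: norm_minus_commute mult_right_mono)
    finally have a: "(?y - x) \<bullet> (s (Suc k) - ?y) \<le> Dm * e k" .
    have "e k \<le> Dm" unfolding e_def using dist_P[OF Pe_in sk1] .
    then have b: "(e k)\<^sup>2 \<le> Dm * e k" unfolding power2_eq_square using e0 by (intro mult_right_mono) auto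
    show ?thesis using f eq a b by linarith
  qed
  have sumsq: "(\<Sum>k<Suc n. (r k)\<^sup>2) \<le> Dm\<^sup>2 + 3 * Dm * (\<Sum>k<Suc n. e k)"
  proof -
    have "(\<Sum>k<Suc n. (r k)\<^sup>2) \<le> (\<Sum>k<Suc n. (norm (s k - x))\<^sup>2 - (norm (s (Suc k) - x))\<^sup>2 + 3 * Dm * e k)"
      using sq by (intro sum_mono) auto
    also have "\<dots> = (\<Sum>k<Suc n. (norm (s k - x))\<^sup>2 - (norm (s (Suc k) - x))\<^sup>2) + 3 * Dm * (\<Sum>k<Suc n. e k)"
      by (simp only: sum.distrib sum_distrib_left)
    also have "\<dots> = (norm (s 0 - x))\<^sup>2 - (norm (s (Suc n) - x))\<^sup>2 + 3 * Dm * (\<Sum>k<Suc n. e k)"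
      by (simp only: sum_lessThan_telescope'[of "\<lambda>k. (norm (s k - x))\<^sup>2" "Suc n"])
    also have "\<dots> \<le> Dm\<^sup>2 + 3 * Dm * (\<Sum>k<Suc n. e k)"
    proof -
      have "norm (s 0 - x) \<le> Dm" using dist_P[OF _ x(1)] sP[of 0] by simp
      then have "(norm (s 0 - x))\<^sup>2 \<le> Dm\<^sup>2" by (intro power_mono) auto
      then show ?thesis using zero_le_power2[of "norm (s (Suc n) - x)"] by linarith
    qed
    finally show ?thesis .
  qed
  define E where "E = (\<Sum>k<Suc n. e k)"
  have E0: "0 \<le> E" unfolding E_def using e0 by (simp add: sum_nonneg)
  define A where "A = r n - (\<Sum>k<n. e k)"
  have "A * sqrt (real (Suc n)) \<le> Dm + 3/2 * E"
  proof (cases "A \<le> 0")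
    case True
    then have "A * sqrt (real (Suc n)) \<le> 0" by (simp add: mult_nonpos_nonneg)
    also have "0 \<le> Dm + 3/2 * E" using Dm_nonneg E0 by simp
    finally show ?thesis .
  next
    case False
    have "(\<Sum>k<Suc n. A\<^sup>2) \<le> (\<Sum>k<Suc n. (r k)\<^sup>2)"
      using bnd False unfolding A_def by (intro sum_mono power_mono) auto
    also have "\<dots> \<le> (Dm + 3/2 * E)\<^sup>2"
    proof -
      have "(Dm + 3/2 * E)\<^sup>2 = Dm\<^sup>2 + 3 * Dm * E + 9/4 * E\<^sup>2" by (simp add: power2_eq_square algebra_simps)
      moreover have "0 \<le> 9/4 * E\<^sup>2" by simp
      ultimately show ?thesis using sumsq unfolding E_def[symmetric] by linarith
    qed
    finally have "real (Suc n) * A\<^sup>2 \<le> (Dm + 3/2 * E)\<^sup>2" by simp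
    then have "sqrt (real (Suc n) * A\<^sup>2) \<le> sqrt ((Dm + 3/2 * E)\<^sup>2)" by (rule real_sqrt_le_mono)
    then show ?thesis using False Dm_nonneg E0 by (simp add: real_sqrt_mult mult.commute)
  qed
  then have "A \<le> (Dm + 3/2 * E) / sqrt (real (Suc n))" by (simp add: pos_le_divide_eq)
  then show ?thesis unfolding A_def E_def by simp
qed

end


theorem theorem7:
  fixes Xs :: "'n::finite \<Rightarrow> 'e::euclidean_space set"
    and v :: "'n \<Rightarrow> ('e ^ 'n) \<Rightarrow> real"
    and gr :: "'n \<Rightarrow> ('e ^ 'n) \<Rightarrow> 'e"
    and L \<mu> c \<zeta> :: real and K T :: nat
    and M :: "'w measure"
    and \<sigma> :: "nat \<Rightarrow> 'w \<Rightarrow> ('e ^ 'n)"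
    and s0 :: "'e ^ 'n"
  assumes Xs: "\<And>i. Xs i \<noteq> {} \<and> compact (Xs i) \<and> convex (Xs i)"
    and diff: "\<And>i p. p \<in> profiles Xs \<Longrightarrow> v i differentiable (at p)"
    and grad: "\<And>i p. p \<in> profiles Xs \<Longrightarrow>
        ((\<lambda>x. v i (upd p i x)) has_derivative (\<lambda>h. gr i p \<bullet> h)) (at (p $ i))"
    and monotone: "\<And>p q. p \<in> profiles Xs \<Longrightarrow> q \<in> profiles Xs \<Longrightarrow>
        (\<Sum>i\<in>UNIV. (gr i p - gr i q) \<bullet> (p $ i - q $ i)) \<le> 0"
    and L_nonneg: "L \<ge> 0"
    and smooth: "\<And>p q. p \<in> profiles Xs \<Longrightarrow> q \<in> profiles Xs \<Longrightarrow>
        (\<Sum>i\<in>UNIV. (norm (gr i p - gr i q))\<^sup>2) \<le> L\<^sup>2 * (norm (p - q))\<^sup>2"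
    and mu: "\<mu> > 0"
    and K: "K \<ge> 3"
    and T: "real T \<ge> max (real K ^ 4) 3"
    and c: "c > 0"
    and M: "prob_space M"
    and s0: "s0 \<in> profiles Xs"
    and sigma0: "\<And>x. x \<in> space M \<Longrightarrow> \<sigma> 0 x = s0"
    and sigma_meas: "\<And>k. k \<le> K \<Longrightarrow> \<sigma> k \<in> borel_measurable M"
    and sigma_in: "\<And>k x. k \<le> K \<Longrightarrow> x \<in> space M \<Longrightarrow> \<sigma> k x \<in> profiles Xs"
    and cond: "\<And>k. k < K \<Longrightarrow>
        AE x in M. real_cond_exp M (vimage_algebra (space M) (\<sigma> k) borel)
          (\<lambda>y. (norm (perturbed_eq v Xs \<mu> (\<sigma> k y) - \<sigma> (Suc k) y))\<^sup>2) x
          \<le> c\<^sup>2 * ln (real T) / real T"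
    and zeta: "\<And>p. p \<in> profiles Xs \<Longrightarrow> sqrt (\<Sum>i\<in>UNIV. (norm (gr i p))\<^sup>2) \<le> \<zeta>"
  shows "(\<integral>x. exploit v Xs (\<sigma> K x) \<partial>M)
       \<le> (2 * (diameter (profiles Xs) * (c * L + \<mu> * sqrt c * sqrt (2 * diameter (profiles Xs) + \<zeta> / \<mu> + c))
              + c * \<zeta>) * ln (real K) + \<mu> * (diameter (profiles Xs))\<^sup>2) / sqrt (real K)"
proof -
  interpret gamemu Xs v gr L \<mu>
    by unfold_locales (use Xs grad monotone L_nonneg smooth mu in auto)
  interpret M: prob_space M by (rule M)
  obtain n where Kn: "K = Suc n" using K by (cases K) auto
  have zF: "\<And>p. p \<in> P \<Longrightarrow> norm (F p) \<le> \<zeta>" using zeta Fv_norm by metis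
  have z0: "0 \<le> \<zeta>" using zF[OF s0] norm_ge_zero order_trans by blast
  define \<delta> where "\<delta> = c * sqrt (ln (real T) / real T)"
  have T3: "3 \<le> real T" using T by simp
  have lnT: "0 < ln (real T)" using T3 by simp
  have d0: "0 < \<delta>" unfolding \<delta>_def using c lnT T3 by simp
  have dsq: "\<delta>\<^sup>2 = c\<^sup>2 * ln (real T) / real T"
    unfolding \<delta>_def using lnT T3 by (simp add: power_mult_distrib)
  define e where "e = (\<lambda>k x. norm (Pe (\<sigma> k x) - \<sigma> (Suc k) x))"
  have Pe_meas: "Pe \<in> borel_measurable borel"
    by (rule borel_measurable_continuous_onI[OF Pe_cont])
  have meas_Pe: "(\<lambda>x. Pe (\<sigma> k x)) \<in> borel_measurable M" if "k \<le> K" for k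
    using measurable_compose[OF sigma_meas[OF that] Pe_meas] by (simp add: o_def)
  have meas_e: "e k \<in> borel_measurable M" if "k < K" for k
  proof -
    have [measurable]: "(\<lambda>x. Pe (\<sigma> k x)) \<in> borel_measurable M" "\<sigma> (Suc k) \<in> borel_measurable M"
      using meas_Pe sigma_meas that by auto
    show ?thesis unfolding e_def by measurable
  qed
  have e_bnd: "e k x \<le> Dm" if "k < K" "x \<in> space M" for k x
    unfolding e_def using dist_P[OF Pe_in sigma_in[of "Suc k" x]] that by simp
  have int_e: "integrable M (e k)" if "k < K" for k
    by (rule M.integrable_const_bound[where B=Dm]) (use e_bnd meas_e that in \<open>auto simp: e_def\<close>)
  have int_e2: "integrable M (\<lambda>x. (e k x)\<^sup>2)" if "k < K" for k
  proof (rule M.integrable_const_bound[where B="Dm\<^sup>2"])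
    show "AE x in M. norm ((e k x)\<^sup>2) \<le> Dm\<^sup>2"
      using e_bnd that by (auto simp: e_def intro!: power_mono)
    show "(\<lambda>x. (e k x)\<^sup>2) \<in> borel_measurable M" using meas_e[OF that] by measurable
  qed
  have Ee2: "(\<integral>x. (e k x)\<^sup>2 \<partial>M) \<le> \<delta>\<^sup>2" if k: "k < K" for k
  proof -
    let ?F = "vimage_algebra (space M) (\<sigma> k) borel"
    interpret S: finite_measure_subalgebra M ?F
    proof unfold_locales
      show "subalgebra M ?F" unfolding subalgebra_def
        using sets_image_in_sets[OF refl sigma_meas, of k] k by simp
    qed
    have "(\<integral>x. (e k x)\<^sup>2 \<partial>M) = (\<integral>x. real_cond_exp M ?F (\<lambda>y. (e k y)\<^sup>2) x \<partial>M)"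
      using S.real_cond_exp_int(2)[OF int_e2[OF k]] by simp
    also have "\<dots> \<le> (\<integral>x. \<delta>\<^sup>2 \<partial>M)"
    proof (rule integral_mono_AE)
      show "integrable M (real_cond_exp M ?F (\<lambda>y. (e k y)\<^sup>2))"
        using S.real_cond_exp_int(1)[OF int_e2[OF k]] .
      show "AE x in M. real_cond_exp M ?F (\<lambda>y. (e k y)\<^sup>2) x \<le> \<delta>\<^sup>2"
        using cond[OF k] unfolding dsq e_def by simp
    qed simp
    also have "\<dots> = \<delta>\<^sup>2" by (simp add: M.prob_space)
    finally show ?thesis .
  qed
  have Ee: "(\<integral>x. e k x \<partial>M) \<le> \<delta>" if k: "k < K" for k
  proof -
    have "(\<integral>x. e k x \<partial>M) \<le> (\<integral>x. (e k x)\<^sup>2 / (2 * \<delta>) + \<delta> / 2 \<partial>M)"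
    proof (rule integral_mono)
      show "integrable M (e k)" using int_e[OF k] .
      show "integrable M (\<lambda>x. (e k x)\<^sup>2 / (2 * \<delta>) + \<delta> / 2)"
        using int_e2[OF k] by simp
      fix x
      have "0 \<le> (e k x - \<delta>)\<^sup>2" by simp
      then have "2 * \<delta> * e k x \<le> (e k x)\<^sup>2 + \<delta>\<^sup>2" by (simp add: power2_eq_square algebra_simps)
      then show "e k x \<le> (e k x)\<^sup>2 / (2 * \<delta>) + \<delta> / 2"
        using d0 by (simp add: field_simps power2_eq_square)
    qed
    also have "\<dots> = (\<integral>x. (e k x)\<^sup>2 \<partial>M) / (2 * \<delta>) + \<delta> / 2"
      using int_e2[OF k] by (simp add: M.prob_space)
    also have "\<dots> \<le> \<delta>\<^sup>2 / (2 * \<delta>) + \<delta> / 2"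
      using Ee2[OF k] d0 by (simp add: divide_right_mono)
    also have "\<dots> = \<delta>" using d0 by (simp add: power2_eq_square)
    finally show ?thesis .
  qed
  define a1 where "a1 = \<mu> * Dm"
  define a0 where "a0 = \<mu> * Dm * Dm / sqrt (real K)"
  define a2 where "a2 = \<mu> * Dm * (3/2) / sqrt (real K)"
  define a3 where "a3 = L * Dm + \<zeta>"
  define B where "B = (\<lambda>x. a1 * (\<Sum>k<n. e k x) + a0 + a2 * (\<Sum>k<K. e k x) + a3 * e n x)"
  have pw: "exploit v Xs (\<sigma> K x) \<le> B x" if x: "x \<in> space M" for x
  proof -
    have sP: "\<And>k. k \<le> Suc n \<Longrightarrow> \<sigma> k x \<in> P" using sigma_in x Kn by simp
    have tr: "norm (Pe (\<sigma> n x) - \<sigma> n x) \<le> (\<Sum>k<n. e k x) + (Dm + 3/2 * (\<Sum>k<Suc n. e k x)) / sqrt (real (Suc n))"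
      using traj[of n "\<lambda>k. \<sigma> k x", OF sP] unfolding e_def by simp
    have ex: "exploit v Xs (\<sigma> K x) \<le> \<mu> * Dm * norm (Pe (\<sigma> n x) - \<sigma> n x) + (L * Dm + \<zeta>) * e n x"
      using exploit_approx[OF sP[of n] sP[of "Suc n"] zF] unfolding e_def Kn by simp
    have "\<mu> * Dm * norm (Pe (\<sigma> n x) - \<sigma> n x) \<le> \<mu> * Dm * ((\<Sum>k<n. e k x) + (Dm + 3/2 * (\<Sum>k<Suc n. e k x)) / sqrt (real (Suc n)))"
      using tr mu Dm_nonneg by (intro mult_left_mono) auto
    also have "\<dots> = a1 * (\<Sum>k<n. e k x) + a0 + a2 * (\<Sum>k<K. e k x)"
      unfolding a1_def a0_def a2_def Kn by (simp add: add_divide_distrib algebra_simps)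
    finally show ?thesis using ex unfolding B_def a3_def by simp
  qed
  have a_nn: "0 \<le> a1" "0 \<le> a0" "0 \<le> a2" "0 \<le> a3"
    unfolding a1_def a0_def a2_def a3_def using mu Dm_nonneg L_nonneg z0 by auto
  have intS: "integrable M (\<lambda>x. \<Sum>k<m. e k x)" if "m \<le> K" for m
    by (rule Bochner_Integration.integrable_sum) (use int_e that in auto)
  have intB: "integrable M B" unfolding B_def
    using intS[of n] intS[of K] int_e[of n] Kn by simp
  have ES: "(\<integral>x. (\<Sum>k<m. e k x) \<partial>M) \<le> real m * \<delta>" if "m \<le> K" for m
  proof -
    have "(\<integral>x. (\<Sum>k<m. e k x) \<partial>M) = (\<Sum>k<m. (\<integral>x. e k x \<partial>M))"
      by (rule Bochner_Integration.integral_sum) (use int_e that in auto)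
    also have "\<dots> \<le> (\<Sum>k<m. \<delta>)" using Ee that by (intro sum_mono) auto
    finally show ?thesis by simp
  qed
  have intB_eq: "(\<integral>x. B x \<partial>M) = a1 * (\<integral>x. (\<Sum>k<n. e k x) \<partial>M) + a0 + a2 * (\<integral>x. (\<Sum>k<K. e k x) \<partial>M) + a3 * (\<integral>x. e n x \<partial>M)"
    unfolding B_def using intS[of n] intS[of K] int_e[of n] Kn by (simp add: M.prob_space)
  have "(\<integral>x. B x \<partial>M) \<le> a1 * (real n * \<delta>) + a0 + a2 * (real K * \<delta>) + a3 * \<delta>"
    unfolding intB_eq using ES[of n] ES[of K] Ee[of n] a_nn Kn
    by (intro add_mono mult_left_mono) auto
  also have "\<dots> = \<mu> * Dm * ((real K - 1) * \<delta> + (Dm + 3/2 * (real K * \<delta>)) / sqrt (real K)) + (L * Dm + \<zeta>) * \<delta>"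
    unfolding a1_def a0_def a2_def a3_def Kn by (simp add: add_divide_distrib algebra_simps)
  also have "\<dots> \<le> (2 * (Dm * (c * L + \<mu> * sqrt c * sqrt (2 * Dm + \<zeta> / \<mu> + c)) + c * \<zeta>) * ln (real K) + \<mu> * Dm\<^sup>2) / sqrt (real K)"
    by (rule final_num[OF K _ c Dm_nonneg L_nonneg z0 mu \<delta>_def]) (use T in simp)
  finally have main: "(\<integral>x. B x \<partial>M) \<le> (2 * (Dm * (c * L + \<mu> * sqrt c * sqrt (2 * Dm + \<zeta> / \<mu> + c)) + c * \<zeta>) * ln (real K) + \<mu> * Dm\<^sup>2) / sqrt (real K)" .
  have Bnn: "0 \<le> (\<integral>x. B x \<partial>M)"
    unfolding B_def using a_nn e_def by (intro integral_nonneg_AE) (auto intro!: add_nonneg_nonneg mult_nonneg_nonneg sum_nonneg)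
  show ?thesis
  proof (cases "integrable M (\<lambda>x. exploit v Xs (\<sigma> K x))")
    case True
    have "(\<integral>x. exploit v Xs (\<sigma> K x) \<partial>M) \<le> (\<integral>x. B x \<partial>M)"
      by (rule integral_mono[OF True intB pw])
    then show ?thesis using main by linarith
  next
    case False
    then have "(\<integral>x. exploit v Xs (\<sigma> K x) \<partial>M) = 0" by (rule not_integrable_integral_eq)
    then show ?thesis using main Bnn by linarith
  qed
qed


end
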